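(* Let $v_1\ge v_2>0$, $m\in\mathbb{Z}_{\ge1}$, $\alpha\in(0,1)$ and $0<b\le m$; put $\delta=\frac{2m+1}{m+1}$ and $\sigma=\frac{2m+1}{m}$. Let $(X,Y)$ be a strategy profile with $\mathbf{E}(X)=m+\alpha$ and $\mathbf{E}(Y)=b$ such that: $\frac{m(m+1)}{b}=\frac{v_1}{2}$; $(X,Y)$ is a Nash equilibrium of the General Lotto game $\Gamma(m+\alpha,b)$; $Y=\left(1-\frac bm\right)\delta_0+\frac bmU_{\mathrm{E}}^m$; and (a) if $0<\alpha\le\frac{m+1}{2m+1}$, $X=\lambda_{\mathrm{O}}\big((1-\alpha)U_{\mathrm{O}}^m+\alpha U_{\mathrm{O}}^{m+1}\big)+\lambda_{\mathrm{E}}\big((1-\alpha)U_{\mathrm{E}}^m+\alpha U_{\mathrm{O}}^{m+1}\big)+\sum_{j=1}^m\lambda_j\big(\alpha\delta V_j^m+(1-\alpha\delta)U_{\mathrm{O}}^m\big)+\sum_{j=1}^m\kappa_j\big(\alpha\delta V_j^m+(1-\alpha\delta)U_{\mathrm{E}}^m\big)$; (b) if $\frac{m+1}{2m+1}<\alpha<1$, $X=\lambda_{\mathrm{O}}\big((1-\alpha)U_{\mathrm{O}}^m+\alpha U_{\mathrm{O}}^{m+1}\big)+\lambda_{\mathrm{E}}\big((1-\alpha)U_{\mathrm{E}}^m+\alpha U_{\mathrm{O}}^{m+1}\big)+\sum_{j=1}^m\lambda_j\big((1-\alpha)\sigma V_j^m+(1-(1-\alpha)\sigma)U_{\mathrm{O}}^{m+1}\big)$,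 with $\kappa_1=\dots=\kappa_m:=0$; where all coefficients $\lambda_{\mathrm{O}},\lambda_{\mathrm{E}},\lambda_j,\kappa_j$ are nonnegative and sum to $1$, $\lambda_{\mathrm{E}}=0$ and $\sum_{j=1}^m\kappa_j=0$ if $m>b$, and $\frac{m+1-\alpha}{m(m+1)}-\frac{2}{v_2}=\lambda_{\mathrm{E}}\frac{1-\alpha}{m(m+1)}+\sum_{j=1}^m\kappa_j\frac{1}{m+1}\left(\frac{1-\alpha}{m}-\frac{\alpha}{m+1}\right)$. Then $(X,Y)$ is a Nash equilibrium of the discrete all-pay auction with valuations $v_1,v_2$.
   Context: Discrete all-pay auction: two players, 1 and 2, value a prize at $v_1$ and $v_2$ respectively, where $v_1\ge v_2>0$. A (mixed) strategy is a probability distribution on $\mathbb{Z}_{\ge 0}$ with finite mean, identified with a $\mathbb{Z}_{\ge0}$-valued random variable; the two players' choices are independent. If player 1 uses $X$ and player 2 uses $Y$, the expected payoffs are $P^1(X,Y)=v_1\Pr(X>Y)+\frac{v_1}{2}\Pr(X=Y)-\mathbf{E}(X)$ and $P^2(Y,X)=v_2\Pr(Y>X)+\frac{v_2}{2}\Pr(X=Y)-\mathbf{E}(Y)$. A Nash equilibrium of the all-pay auction is a pair $(X,Y)$ with $P^1(X,Y)\ge P^1(X',Y)$ and $P^2(Y,X)\ge P^2(Y',X)$ for all strategies $X',Y'$. $\delta_j$ denotes the point mass at $j$; $\lambda A+(1-\lambda)B$ denotes the mixture of distributions $A$ and $B$ (similarly for longer convex combinations). Discrete General Lotto game: for reals $a,b\ge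 0$, in $\Gamma(a,b)$ player 1 chooses a distribution $X$ on $\mathbb{Z}_{\ge0}$ with $\mathbf{E}(X)=a$ and player 2 chooses a distribution $Y$ on $\mathbb{Z}_{\ge 0}$ with $\mathbf{E}(Y)=b$ (independently); the payoff to player 1 is $H(X,Y)=\Pr(X>Y)-\Pr(X<Y)$ and to player 2 is $H(Y,X)=-H(X,Y)$. A Nash equilibrium of $\Gamma(a,b)$ is a pair $(X,Y)$ from these strategy sets such that neither player can increase her payoff by switching to another strategy in her own strategy set. Special distributions: for $m\ge1$, $U_{\mathrm{O}}^m$ is the uniform distribution on $\{1,3,\dots,2m-1\}$; for $m\ge0$, $U_{\mathrm{E}}^m$ is the uniform distribution on $\{0,2,\dots,2m\}$; for $m\ge1$ and $1\le j\le m$, $V_j^m=\sum_{i=1}^{j-1}\frac{2}{2m+1}\delta_{2i-1}+\frac{1}{2m+1}\delta_{2j-1}+\sum_{i=j}^{m}\frac{2}{2m+1}\delta_{2i}$. *)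

theory Defs
  imports "HOL-Probability.Probability"
begin

definition finite_mean :: "nat pmf \<Rightarrow> bool" where
  "finite_mean X \<longleftrightarrow> integrable (measure_pmf X) real"

definition mean :: "nat pmf \<Rightarrow> real" where
  "mean X = measure_pmf.expectation X real"

definition pr_gt :: "nat pmf \<Rightarrow> nat pmf \<Rightarrow> real" where
  "pr_gt X Y = measure_pmf.prob (pair_pmf X Y) {p. fst p > snd p}"

definition pr_eq :: "nat pmf \<Rightarrow> nat pmf \<Rightarrow> real" where
  "pr_eq X Y = measure_pmf.prob (pair_pmf X Y) {p. fst p = snd p}"

definition allpay_payoff :: "real \<Rightarrow> nat pmf \<Rightarrow> nat pmf \<Rightarrow> real" where
  "allpay_payoff v X Y = v * pr_gt X Y + v / 2 * pr_eq X Y - mean X"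

definition allpay_NE :: "real \<Rightarrow> real \<Rightarrow> nat pmf \<Rightarrow> nat pmf \<Rightarrow> bool" where
  "allpay_NE v1 v2 X Y \<longleftrightarrow> finite_mean X \<and> finite_mean Y \<and>
     (\<forall>X'. finite_mean X' \<longrightarrow> allpay_payoff v1 X' Y \<le> allpay_payoff v1 X Y) \<and>
     (\<forall>Y'. finite_mean Y' \<longrightarrow> allpay_payoff v2 Y' X \<le> allpay_payoff v2 Y X)"

definition lotto_H :: "nat pmf \<Rightarrow> nat pmf \<Rightarrow> real" where
  "lotto_H X Y = pr_gt X Y - pr_gt Y X"

definition lotto_NE :: "real \<Rightarrow> real \<Rightarrow> nat pmf \<Rightarrow> nat pmf \<Rightarrow> bool" where
  "lotto_NE a b X Y \<longleftrightarrow>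
     finite_mean X \<and> mean X = a \<and> finite_mean Y \<and> mean Y = b \<and>
     (\<forall>X'. finite_mean X' \<and> mean X' = a \<longrightarrow> lotto_H X' Y \<le> lotto_H X Y) \<and>
     (\<forall>Y'. finite_mean Y' \<and> mean Y' = b \<longrightarrow> lotto_H Y' X \<le> lotto_H Y X)"

text \<open>Probability mass functions of the special distributions
  (mixtures are expressed pointwise on the mass functions).\<close>

definition uO :: "nat \<Rightarrow> nat \<Rightarrow> real" where
  "uO m k = (if odd k \<and> k \<le> 2 * m - 1 then 1 / real m else 0)"

definition uE :: "nat \<Rightarrow> nat \<Rightarrow> real" where
  "uE m k = (if even k \<and> k \<le> 2 * m then 1 / (real m + 1) else 0)"

definition vV :: "nat \<Rightarrow> nat \<Rightarrow> nat \<Rightarrow> real" where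
  "vV m j k =
     (if odd k \<and> k + 1 < 2 * j then 2 / (2 * real m + 1)
      else if k + 1 = 2 * j then 1 / (2 * real m + 1)
      else if even k \<and> 2 * j \<le> k \<and> k \<le> 2 * m then 2 / (2 * real m + 1)
      else 0)"

end

theory Submission
  imports Defs
begin


lemma prob_bind_pmf:
  "measure_pmf.prob (bind_pmf M f) S = (\<integral>x. measure_pmf.prob (f x) S \<partial>measure_pmf M)"
  unfolding measure_pmf_bind
  by (rule measure_pmf.measure_bind[where N="count_space UNIV"]) (auto simp: comp_def measure_subprob)

lemma pair_bind: "pair_pmf A B = bind_pmf A (\<lambda>a. map_pmf (Pair a) B)"
  unfolding pair_pmf_def by (simp add: map_pmf_def)

lemma pr_gt_int: "pr_gt A B = (\<integral>a. measure_pmf.prob B {..<a} \<partial>measure_pmf A)"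
  unfolding pr_gt_def pair_bind prob_bind_pmf
  by (simp add: vimage_def lessThan_def)

lemma pr_eq_int: "pr_eq A B = (\<integral>a. pmf B a \<partial>measure_pmf A)"
  unfolding pr_eq_def pair_bind prob_bind_pmf
  by (simp add: vimage_def measure_pmf_single[symmetric])

lemma pr_gt_int2: "pr_gt B A = (\<integral>a. measure_pmf.prob B {a<..} \<partial>measure_pmf A)"
proof -
  have "pr_gt B A = measure_pmf.prob (pair_pmf A B) {p. snd p > fst p}"
    unfolding pr_gt_def by (subst pair_commute_pmf) (simp add: vimage_def case_prod_beta)
  also have "\<dots> = (\<integral>a. measure_pmf.prob B {a<..} \<partial>measure_pmf A)"
    unfolding pair_bind prob_bind_pmf by (simp add: vimage_def greaterThan_def)
  finally show ?thesis .
qed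

definition gX :: "nat pmf \<Rightarrow> nat \<Rightarrow> real" where
  "gX X k = measure_pmf.prob X {..<k} + pmf X k / 2"

lemma prob_split: fixes B :: "nat pmf" shows "measure_pmf.prob B {a<..} = 1 - measure_pmf.prob B {..<a} - pmf B a"
proof -
  have "measure_pmf.prob B {a<..} = measure_pmf.prob B (space (measure_pmf B) - {..a})"
    by (rule arg_cong[where f="measure_pmf.prob B"]) auto
  also have "\<dots> = 1 - measure_pmf.prob B {..a}" by (rule measure_pmf.prob_compl) simp
  also have "measure_pmf.prob B {..a} = measure_pmf.prob B {..<a} + pmf B a"
    by (simp add: measure_measure_pmf_finite lessThan_Suc_atMost[symmetric])
  finally show ?thesis by simp
qed

lemma lotto_int: "lotto_H A B = (\<integral>a. 2 * gX B a - 1 \<partial>measure_pmf A)"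
proof -
  have i1: "integrable (measure_pmf A) (\<lambda>a. measure_pmf.prob B {..<a})"
    by (rule measure_pmf.integrable_const_bound[where B=1]) auto
  have i2: "integrable (measure_pmf A) (\<lambda>a. measure_pmf.prob B {a<..})"
    by (rule measure_pmf.integrable_const_bound[where B=1]) auto
  have "lotto_H A B = (\<integral>a. measure_pmf.prob B {..<a} - measure_pmf.prob B {a<..} \<partial>measure_pmf A)"
    unfolding lotto_H_def pr_gt_int[of A B] pr_gt_int2[of B A] using i1 i2 by simp
  also have "\<dots> = (\<integral>a. 2 * gX B a - 1 \<partial>measure_pmf A)"
    by (rule Bochner_Integration.integral_cong) (auto simp: prob_split gX_def)
  finally show ?thesis .
qed

lemma payoff_int:
  assumes "finite_mean A"
  shows "allpay_payoff v A B = (\<integral>a. v * gX B a - real a \<partial>measure_pmf A)"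
proof -
  have i1: "integrable (measure_pmf A) (\<lambda>a. measure_pmf.prob B {..<a})"
    by (rule measure_pmf.integrable_const_bound[where B=1]) auto
  have i2: "integrable (measure_pmf A) (\<lambda>a. pmf B a)"
    by (rule measure_pmf.integrable_const_bound[where B=1]) (auto simp: pmf_le_1)
  have i3: "integrable (measure_pmf A) (\<lambda>a. real a)" using assms by (simp add: finite_mean_def)
  have "allpay_payoff v A B = (\<integral>a. v * measure_pmf.prob B {..<a} + v / 2 * pmf B a - real a \<partial>measure_pmf A)"
    unfolding allpay_payoff_def pr_gt_int pr_eq_int mean_def using i1 i2 i3 by simp
  also have "\<dots> = (\<integral>a. v * gX B a - real a \<partial>measure_pmf A)"
    by (rule Bochner_Integration.integral_cong) (auto simp: gX_def algebra_simps)
  finally show ?thesis .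
qed

lemma pert:
  fixes X Y :: "nat pmf" and e :: "nat \<Rightarrow> real"
  assumes NE: "lotto_NE a b X Y" and supp: "set_pmf Y \<subseteq> {..N}"
   and nn: "\<And>i. 0 \<le> pmf Y i + e i" and out: "\<And>i. i > N \<Longrightarrow> e i = 0"
   and s0: "(\<Sum>i\<le>N. e i) = 0" and s1: "(\<Sum>i\<le>N. e i * real i) = 0"
  shows "(\<Sum>i\<le>N. e i * gX X i) \<le> 0"
proof -
  define f where "f i = pmf Y i + e i" for i
  have f0: "\<And>i. i > N \<Longrightarrow> f i = 0" using out supp
    by (auto simp: f_def set_pmf_iff)
  have sY: "(\<Sum>i\<le>N. pmf Y i) = 1" by (rule sum_pmf_eq_1) (use supp in auto)
  have int1: "(\<integral>\<^sup>+x. ennreal (f x) \<partial>count_space UNIV) = 1"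
  proof -
    have "(\<integral>\<^sup>+x. ennreal (f x) \<partial>count_space UNIV) = (\<Sum>x\<le>N. ennreal (f x))"
      by (rule nn_integral_count_space') (auto simp: f0)
    also have "\<dots> = ennreal (\<Sum>x\<le>N. f x)" using nn by (simp add: f_def sum_ennreal)
    also have "(\<Sum>x\<le>N. f x) = 1" by (simp add: f_def sum.distrib sY s0)
    finally show ?thesis by simp
  qed
  define Y' where "Y' = embed_pmf f"
  have pY': "\<And>i. pmf Y' i = f i" unfolding Y'_def
    by (rule pmf_embed_pmf) (use nn int1 f_def in auto)
  have sY': "set_pmf Y' \<subseteq> {..N}" proof
    fix x assume "x \<in> set_pmf Y'"
    then have "f x \<noteq> 0" by (simp add: set_pmf_iff pY')
    then show "x \<in> {..N}" using f0 by (cases "x \<le> N") auto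
  qed
  have fin: "finite (set_pmf Y')" using sY' finite_subset by blast
  have fmY': "finite_mean Y'" unfolding finite_mean_def by (rule integrable_measure_pmf_finite[OF fin])
  have "mean Y' = (\<Sum>i\<le>N. real i * pmf Y' i)" unfolding mean_def
    by (rule integral_measure_pmf_real) (use sY' in auto)
  also have "\<dots> = (\<Sum>i\<le>N. real i * pmf Y i) + (\<Sum>i\<le>N. e i * real i)"
    by (simp add: pY' f_def algebra_simps sum.distrib)
  also have "(\<Sum>i\<le>N. real i * pmf Y i) = mean Y" unfolding mean_def
    by (rule integral_measure_pmf_real[symmetric]) (use supp in auto)
  finally have mY': "mean Y' = b" using NE s1 by (simp add: lotto_NE_def)
  have H: "\<And>Z. set_pmf Z \<subseteq> {..N} \<Longrightarrow> lotto_H Z X = (\<Sum>i\<le>N. (2 * gX X i - 1) * pmf Z i)"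
    unfolding lotto_int by (rule integral_measure_pmf_real) auto
  from NE fmY' mY' have "lotto_H Y' X \<le> lotto_H Y X" by (simp add: lotto_NE_def)
  then have "(\<Sum>i\<le>N. (2*gX X i - 1) * pmf Y' i) \<le> (\<Sum>i\<le>N. (2*gX X i - 1) * pmf Y i)"
    using H[OF sY'] H[OF supp] by simp
  then have "(\<Sum>i\<le>N. (2*gX X i - 1) * e i) \<le> 0"
    by (simp add: pY' f_def distrib_left sum.distrib)
  moreover have "(\<Sum>i\<le>N. (2*gX X i - 1) * e i) = 2 * (\<Sum>i\<le>N. e i * gX X i) - (\<Sum>i\<le>N. e i)"
    by (simp add: algebra_simps sum.distrib sum_distrib_left sum_subtractf)
  ultimately show ?thesis using s0 by simp
qed

lemma delta_sum: "p \<le> (N::nat) \<Longrightarrow> (\<Sum>i\<le>N. (if i = p then c else 0) * f i) = (c * f p :: real)"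
proof -
  assume "p \<le> N"
  have "(\<Sum>i\<le>N. (if i=p then c else 0)*f i) = (\<Sum>i\<le>N. if i = p then c * f p else 0)"
    by (rule sum.cong) auto
  then show ?thesis using \<open>p \<le> N\<close> by simp
qed

lemma pert3:
  fixes X Y :: "nat pmf"
  assumes NE: "lotto_NE a b X Y" and supp: "set_pmf Y \<subseteq> {..N}"
   and le: "p \<le> N" "q \<le> N" "r \<le> N" and dist: "p \<noteq> q" "p \<noteq> r" "q \<noteq> r"
   and nn: "0 \<le> pmf Y p + ap" "0 \<le> pmf Y q + aq" "0 \<le> pmf Y r + ar"
   and s0: "ap + aq + ar = 0" and s1: "ap * real p + aq * real q + ar * real r = 0"
  shows "ap * gX X p + aq * gX X q + ar * gX X r \<le> 0"
proof -
  define e where "e i = (if i = p then ap else 0) + (if i = q then aq else 0) + (if i = r then ar else 0)" for i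
  have "(\<Sum>i\<le>N. e i * gX X i) \<le> 0"
  proof (rule pert[OF NE supp])
    show "0 \<le> pmf Y i + e i" for i using nn dist by (auto simp: e_def)
    show "N < i \<Longrightarrow> e i = 0" for i using le by (auto simp: e_def)
    show "(\<Sum>i\<le>N. e i) = 0" using le s0 by (simp add: e_def sum.distrib)
    show "(\<Sum>i\<le>N. e i * real i) = 0" using le s1
      by (simp only: e_def distrib_right sum.distrib delta_sum)
  qed
  moreover have "(\<Sum>i\<le>N. e i * gX X i) = ap * gX X p + aq * gX X q + ar * gX X r"
    using le by (simp only: e_def distrib_right sum.distrib delta_sum)
  ultimately show ?thesis by simp
qed

lemma combine:
  fixes lO lE SL SK T d E A TK Q :: real
  assumes "lO + lE + SL + SK = 1" "T - d = lE * A + SK * Q" "T - E = A" "T - TK = Q"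
  shows "lO*T + lE*E + SL*T + SK*TK = d"
proof -
  have "lO*T + lE*E + SL*T + SK*TK = T*(lO + lE + SL + SK) - lE*(T-E) - SK*(T-TK)"
    by (simp add: algebra_simps)
  also have "\<dots> = d" using assms by simp
  finally show ?thesis .
qed

lemma vV_zero_big: "j \<le> m \<Longrightarrow> 2*m < k \<Longrightarrow> vV m j k = 0"
  by (auto simp: vV_def)
lemma vV_zero0: "1 \<le> j \<Longrightarrow> vV m j 0 = 0"
  by (auto simp: vV_def)
lemma vV_DD: assumes "1 \<le> j" "j \<le> m" shows "vV m j 0/2 + vV m j 1 + vV m j 2/2 = 2/(2*real m+1)"
proof (cases "j = 1")
  case True
  have "2 / (4 * real m + 2) = 1 / (2*real m+1)"
    by (simp add: divide_simps) 
  then show ?thesis using True assms by (auto simp: vV_def)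
qed (use assms in \<open>auto simp: vV_def\<close>)

lemma uvals:
  assumes "1 \<le> m"
  shows "uO m 0 = 0" "uO m 1 = 1/real m" "uO m 2 = 0"
    "uO (m+1) 0 = 0" "uO (m+1) 1 = 1/(real m + 1)" "uO (m+1) 2 = 0"
    "uE m 0 = 1/(real m+1)" "uE m 1 = 0" "uE m 2 = 1/(real m+1)"
  using assms by (auto simp: uO_def uE_def)

lemma comb_sum3:
  fixes f g h :: "nat \<Rightarrow> real"
  shows "(\<Sum>j\<in>J. f j)/2 + (\<Sum>j\<in>J. g j) + (\<Sum>j\<in>J. h j)/2 = (\<Sum>j\<in>J. f j/2 + g j + h j/2)"
  by (simp add: sum.distrib sum_divide_distrib)

lemma cnt2: "1 \<le> k \<Longrightarrow> 2 * min ((k+1) div 2) (m+1) + (if even k \<and> k \<le> 2*m then 1 else (0::nat)) \<le> k + 1"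
proof -
  assume "1 \<le> k"
  obtain t where "k = 2*t \<or> k = 2*t+1" by (metis oddE evenE)
  then show ?thesis
  proof
    assume k: "k = 2*t" show ?thesis unfolding k by (simp add: min_def)
  next
    assume k: "k = 2*t+1" show ?thesis unfolding k by (simp add: min_def)
  qed
qed
lemma cnt3: "1 \<le> k \<Longrightarrow> k \<le> 2*m+1 \<Longrightarrow> 2 * min ((k+1) div 2) (m+1) + (if even k \<and> k \<le> 2*m then 1 else (0::nat)) = k + 1"
proof -
  assume "1 \<le> k" "k \<le> 2*m+1"
  obtain t where "k = 2*t \<or> k = 2*t+1" by (metis oddE evenE)
  then show ?thesis
  proof
    assume k: "k = 2*t" show ?thesis using \<open>1 \<le> k\<close> \<open>k \<le> 2*m+1\<close> unfolding k by (simp add: min_def)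
  next
    assume k: "k = 2*t+1" show ?thesis using \<open>1 \<le> k\<close> \<open>k \<le> 2*m+1\<close> unfolding k by (simp add: min_def)
  qed
qed
lemma cnt: "min ((Suc k+2) div 2) (m+1) = min ((k+2) div 2) (m+1) + (if even (Suc k) \<and> Suc k \<le> 2*m then 1 else (0::nat))"
proof -
  obtain t where "k = 2*t \<or> k = 2*t+1" by (metis oddE evenE)
  then show ?thesis
  proof
    assume k: "k = 2*t" show ?thesis unfolding k by (simp add: min_def)
  next
    assume k: "k = 2*t+1" show ?thesis unfolding k by (simp add: min_def)
  qed
qed

definition DD :: "(nat \<Rightarrow> real) \<Rightarrow> real" where "DD f = f 0 / 2 + f 1 + f 2 / 2"

lemma DD_add[simp]: "DD (\<lambda>k. f k + g k) = DD f + DD g" by (simp add: DD_def field_simps)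
lemma DD_mult[simp]: "DD (\<lambda>k. a * f k) = a * DD f" by (simp add: DD_def algebra_simps)
lemma DD_sum[simp]: "DD (\<lambda>k. \<Sum>j\<in>J. h j k) = (\<Sum>j\<in>J. DD (h j))"
  by (simp add: DD_def sum.distrib sum_divide_distrib)
lemma DD_vV: "1 \<le> j \<Longrightarrow> j \<le> m \<Longrightarrow> DD (vV m j) = 2/(2*real m+1)"
  using vV_DD by (simp add: DD_def)
lemma DD_u:
  assumes "1 \<le> m"
  shows "DD (uO m) = 1/real m" "DD (uO (m+1)) = 1/(real m+1)" "DD (uE m) = 1/(real m+1)"
  unfolding DD_def uvals[OF assms] by (simp_all add: divide_simps)

lemma gX_int: "integrable (measure_pmf A) (\<lambda>a. gX B a)"
proof (rule measure_pmf.integrable_const_bound[where B=2])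
  show "AE x in measure_pmf A. norm (gX B x) \<le> 2"
  proof (rule AE_I2)
    fix x
    have "measure_pmf.prob B {..<x} \<le> 1" "pmf B x \<le> 1" by (simp_all add: pmf_le_1)
    moreover have "measure_pmf.prob B {..<x} \<ge> 0" "pmf B x \<ge> 0" by simp_all
    ultimately have "0 \<le> gX B x" "gX B x \<le> 2" unfolding gX_def by linarith+
    then show "norm (gX B x) \<le> 2" by simp
  qed
qed simp

lemma h1: fixes x a :: real assumes "x > 0"
  shows "a*((2*x+1)/(x+1))*(2/(2*x+1)) = 2*a/(x+1)"
proof -
  have "2*x+1 \<noteq> 0" "x + 1 \<noteq> 0" using assms by auto
  then show ?thesis by (simp add: divide_simps)
qed
lemma h2: fixes x a :: real assumes "x > 0"
  shows "(1-a)*((2*x+1)/x)*(2/(2*x+1)) = 2*(1-a)/x"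
proof -
  have "2*x+1 \<noteq> 0" "x \<noteq> 0" using assms by auto
  then show ?thesis by (simp add: divide_simps)
qed
lemma fL: fixes x a :: real assumes "x > 0"
  shows "a*((2*x+1)/(x+1))*(2/(2*x+1)) + (1 - a*((2*x+1)/(x+1)))/x = (x+1-a)/(x*(x+1))"
proof -
  have "2*x+1 \<noteq> 0" "x + 1 \<noteq> 0" using assms by auto
  have "x \<noteq> 0" using assms by auto
  show ?thesis unfolding h1[OF assms] using \<open>x \<noteq> 0\<close> \<open>x+1 \<noteq> 0\<close> \<open>2*x+1 \<noteq> 0\<close> 
    apply (simp add: divide_simps) by (simp add: algebra_simps)
qed
lemma fK: fixes x a :: real assumes "x > 0"
  shows "a*((2*x+1)/(x+1))*(2/(2*x+1)) + (1 - a*((2*x+1)/(x+1)))/(x+1) = (x+1-a)/(x*(x+1)) - 1/(x+1)*((1-a)/x - a/(x+1))"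
proof -
  have "2*x+1 \<noteq> 0" "x + 1 \<noteq> 0" "x \<noteq> 0" using assms by auto
  then show ?thesis unfolding h1[OF assms] apply (simp add: divide_simps) by (simp add: algebra_simps)
qed
lemma fLB: fixes x a :: real assumes "x > 0"
  shows "(1-a)*((2*x+1)/x)*(2/(2*x+1)) + (1 - (1-a)*((2*x+1)/x))/(x+1) = (x+1-a)/(x*(x+1))"
proof -
  have "2*x+1 \<noteq> 0" "x + 1 \<noteq> 0" "x \<noteq> 0" using assms by auto
  then show ?thesis unfolding h2[OF assms] apply (simp add: divide_simps) by (simp add: algebra_simps)
qed
lemma fA1: fixes x a :: real assumes "x > 0"
  shows "(1-a)/x + a/(x+1) = (x+1-a)/(x*(x+1))" "(x+1-a)/(x*(x+1)) - 1/(x+1) = (1-a)/(x*(x+1))"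
proof -
  have "x + 1 \<noteq> 0" "x \<noteq> 0" using assms by auto
  then show "(1-a)/x + a/(x+1) = (x+1-a)/(x*(x+1))" "(x+1-a)/(x*(x+1)) - 1/(x+1) = (1-a)/(x*(x+1))"
    by (simp_all add: divide_simps) (simp_all add: algebra_simps)
qed




theorem lemma6:
  fixes v1 v2 \<alpha> b lO lE :: real and m :: nat and lam \<kappa> :: "nat \<Rightarrow> real"
    and X Y :: "nat pmf"
  assumes v: "v1 \<ge> v2" "v2 > 0"
    and m: "m \<ge> 1"
    and \<alpha>: "0 < \<alpha>" "\<alpha> < 1"
    and b: "0 < b" "b \<le> real m"
    and fm: "finite_mean X" "finite_mean Y"
    and means: "mean X = real m + \<alpha>" "mean Y = b"
    and val: "real m * (real m + 1) / b = v1 / 2"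
    and NE: "lotto_NE (real m + \<alpha>) b X Y"
    and Y: "\<forall>k. pmf Y k = (1 - b / real m) * (if k = 0 then 1 else 0) + b / real m * uE m k"
    and caseA: "\<alpha> \<le> (real m + 1) / (2 * real m + 1) \<longrightarrow>
       (\<forall>k. pmf X k =
          lO * ((1 - \<alpha>) * uO m k + \<alpha> * uO (m + 1) k)
        + lE * ((1 - \<alpha>) * uE m k + \<alpha> * uO (m + 1) k)
        + (\<Sum>j=1..m. lam j * (\<alpha> * ((2 * real m + 1) / (real m + 1)) * vV m j k
              + (1 - \<alpha> * ((2 * real m + 1) / (real m + 1))) * uO m k))
        + (\<Sum>j=1..m. \<kappa> j * (\<alpha> * ((2 * real m + 1) / (real m + 1)) * vV m j k
              + (1 - \<alpha> * ((2 * real m + 1) / (real m + 1))) * uE m k)))"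
    and caseB: "(real m + 1) / (2 * real m + 1) < \<alpha> \<longrightarrow>
       (\<forall>j\<in>{1..m}. \<kappa> j = 0) \<and>
       (\<forall>k. pmf X k =
          lO * ((1 - \<alpha>) * uO m k + \<alpha> * uO (m + 1) k)
        + lE * ((1 - \<alpha>) * uE m k + \<alpha> * uO (m + 1) k)
        + (\<Sum>j=1..m. lam j * ((1 - \<alpha>) * ((2 * real m + 1) / real m) * vV m j k
              + (1 - (1 - \<alpha>) * ((2 * real m + 1) / real m)) * uO (m + 1) k)))"
    and nonneg: "lO \<ge> 0" "lE \<ge> 0" "\<forall>j\<in>{1..m}. lam j \<ge> 0" "\<forall>j\<in>{1..m}. \<kappa> j \<ge> 0"
    and sum1: "lO + lE + (\<Sum>j=1..m. lam j) + (\<Sum>j=1..m. \<kappa> j) = 1"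
    and mgtb: "real m > b \<longrightarrow> lE = 0 \<and> (\<Sum>j=1..m. \<kappa> j) = 0"
    and eqn: "(real m + 1 - \<alpha>) / (real m * (real m + 1)) - 2 / v2 =
       lE * ((1 - \<alpha>) / (real m * (real m + 1)))
       + (\<Sum>j=1..m. \<kappa> j * (1 / (real m + 1)) * ((1 - \<alpha>) / real m - \<alpha> / (real m + 1)))"
  shows "allpay_NE v1 v2 X Y"

proof -
  have m0: "real m > 0" using m by simp
  define c where "c = b / (real m * (real m + 1))"
  have cpos: "c > 0" using b m0 by (simp add: c_def)
  have v1eq: "v1 = 2 * real m * (real m + 1) / b" using val b by (simp add: field_simps)
  have v1c: "v1 * c = 2"
  proof -
    define q where "q = real m * (real m + 1)"
    have "q > 0" using m0 by (simp add: q_def)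
    have "v1 * c = 2 * q / b * (b / q)"
      by (simp add: q_def mult.assoc v1eq c_def)
    also have "\<dots> = 2" using \<open>q > 0\<close> b by simp
    finally show ?thesis .
  qed
  have v1pos: "v1 > 0" using v by simp
  have bm: "b / real m \<le> 1" using b m0 by simp
  have pY0: "pmf Y 0 = 1 - b / real m + c"
    using Y[rule_format, of 0] m0 by (simp add: uE_def c_def field_simps)
  have pYk: "pmf Y k = (if even k \<and> k \<le> 2*m then c else 0)" if "1 \<le> k" for k
  proof -
    have bc: "b / real m * (1 / (real m + 1)) = c" by (simp add: c_def)
    show ?thesis using Y[rule_format, of k] that by (auto simp: uE_def c_def mult.commute)
  qed
  have pYev: "pmf Y (2*j) \<ge> c" if "j \<le> m" for j
  proof (cases "j = 0")
    case True then show ?thesis using pY0 bm by simp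
  next
    case False then show ?thesis using pYk[of "2*j"] that by simp
  qed
  have pYeq: "pmf Y (2*j) = c" if "1 \<le> j" "j \<le> m" for j
    using pYk[of "2*j"] that by simp
  have suppY: "set_pmf Y \<subseteq> {..2*m}"
  proof
    fix k assume "k \<in> set_pmf Y"
    hence "pmf Y k \<noteq> 0" by (simp add: set_pmf_iff)
    then show "k \<in> {..2*m}" using pYk[of k] by (cases "k = 0") (auto split: if_splits)
  qed
  have suppY2: "k = 0 \<or> (even k \<and> k \<le> 2*m)" if "k \<in> set_pmf Y" for k
  proof -
    have "pmf Y k \<noteq> 0" using that by (simp add: set_pmf_iff)
    then show ?thesis using pYk[of k] by (cases "k = 0") (auto split: if_splits)
  qed
  have cumY: "measure_pmf.prob Y {..<Suc k} = 1 - b/real m + c * real (min ((k+2) div 2) (m+1))" for k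
  proof (induction k)
    case 0
    have "measure_pmf.prob Y {..<Suc 0} = pmf Y 0" by (simp add: measure_measure_pmf_finite)
    then show ?case using pY0 by simp
  next
    case (Suc k)
    have "measure_pmf.prob Y {..<Suc (Suc k)} = measure_pmf.prob Y {..<Suc k} + pmf Y (Suc k)"
      by (simp add: measure_measure_pmf_finite)
    also have "pmf Y (Suc k) = c * real (if even (Suc k) \<and> Suc k \<le> 2*m then 1 else (0::nat))"
      using pYk[of "Suc k"] by simp
    finally have calc: "measure_pmf.prob Y {..<Suc (Suc k)} = measure_pmf.prob Y {..<Suc k} + c * real (if even (Suc k) \<and> Suc k \<le> 2*m then 1 else (0::nat))" .
    have e: "real (min ((Suc k + 2) div 2) (m+1)) = real (min ((k+2) div 2) (m+1)) + real (if even (Suc k) \<and> Suc k \<le> 2*m then 1 else (0::nat))"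
      using cnt[of k m] by (metis of_nat_add)
    show ?case unfolding e distrib_left using calc Suc.IH by linarith
  qed
  define M where "M = v1 * (1 - b / real m) + 1"
  have gY: "v1 * gX Y k - real k = v1 * (1 - b/real m) + real (2 * min ((k+1) div 2) (m+1) + (if even k \<and> k \<le> 2*m then 1 else (0::nat))) - real k"
    if k1: "1 \<le> k" for k
  proof -
    obtain k' where k: "k = Suc k'" using k1 by (cases k) auto
    define Z where "Z = real (min ((k+1) div 2) (m+1))"
    define I where "I = (even k \<and> k \<le> 2*m)"
    have g: "gX Y k = 1 - b/real m + c * Z + (if I then c else 0)/2"
      unfolding gX_def k cumY pYk[OF k1[unfolded k]] Z_def I_def by simp
    have "v1 * gX Y k = v1 * (1 - b/real m) + (v1 * c) * Z + (if I then v1 * c else 0)/2"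
      unfolding g by (cases I) (simp_all add: algebra_simps)
    then have "v1 * gX Y k = v1 * (1 - b/real m) + real (2 * min ((k+1) div 2) (m+1) + (if I then 1 else (0::nat)))"
      using v1c unfolding Z_def by (cases I) simp_all
    then show ?thesis unfolding I_def by simp
  qed
  have gY0: "v1 * gX Y 0 = v1 * (1 - b/real m) / 2 + 1"
  proof -
    have aux: "\<And>x::real. v1 * ((x + c)/2) = v1*x/2 + v1*c/2" by (simp add: field_simps)
    have "gX Y 0 = ((1 - b/real m) + c)/2" unfolding gX_def pY0 by simp
    then have "v1 * gX Y 0 = v1 * ((1 - b/real m + c)/2)" by simp
    also have "\<dots> = v1 * (1 - b/real m)/2 + v1*c/2" by (rule aux)
    finally show ?thesis using v1c by simp
  qed
  have phi1_le: "v1 * gX Y k - real k \<le> M" for k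
  proof (cases "k = 0")
    case True
    have "0 \<le> v1 * (1 - b/real m)" using v1pos bm by simp
    then show ?thesis using True gY0 by (simp add: M_def)
  next
    case False
    then have "1 \<le> k" by simp
    have "real (2 * min ((k+1) div 2) (m+1) + (if even k \<and> k \<le> 2*m then 1 else (0::nat))) \<le> real (k + 1)"
      by (rule of_nat_mono[OF cnt2[OF \<open>1 \<le> k\<close>]])
    then have "real (2 * min ((k+1) div 2) (m+1) + (if even k \<and> k \<le> 2*m then 1 else (0::nat))) \<le> real k + 1"
      by simp
    then show ?thesis using gY[OF \<open>1 \<le> k\<close>] by (simp add: M_def)
  qed
  define P where "P \<longleftrightarrow> \<alpha> \<le> (real m + 1) / (2 * real m + 1)"
  define a' where "a' = \<alpha> * ((2 * real m + 1) / (real m + 1))"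
  define s' where "s' = (1 - \<alpha>) * ((2 * real m + 1) / real m)"
  define A1 where "A1 k = (1 - \<alpha>) * uO m k + \<alpha> * uO (m + 1) k" for k
  define A2 where "A2 k = (1 - \<alpha>) * uE m k + \<alpha> * uO (m + 1) k" for k
  define L where "L j k = a' * vV m j k + (1 - a') * uO m k" for j k
  define K where "K j k = a' * vV m j k + (1 - a') * uE m k" for j k
  define LB where "LB j k = s' * vV m j k + (1 - s') * uO (m+1) k" for j k
  have hA: "pmf X = (\<lambda>k. lO * A1 k + lE * A2 k + (\<Sum>j=1..m. lam j * L j k) + (\<Sum>j=1..m. \<kappa> j * K j k))"
    if P
  proof (rule ext)
    fix k show "pmf X k = lO * A1 k + lE * A2 k + (\<Sum>j=1..m. lam j * L j k) + (\<Sum>j=1..m. \<kappa> j * K j k)"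
      using caseA that unfolding P_def A1_def A2_def L_def K_def a'_def by blast
  qed
  have hB: "pmf X = (\<lambda>k. lO * A1 k + lE * A2 k + (\<Sum>j=1..m. lam j * LB j k))"
    if "\<not> P"
  proof (rule ext)
    fix k show "pmf X k = lO * A1 k + lE * A2 k + (\<Sum>j=1..m. lam j * LB j k)"
      using caseB that unfolding P_def A1_def A2_def LB_def s'_def by (simp add: not_le)
  qed
  have kB: "\<forall>j\<in>{1..m}. \<kappa> j = 0" if "\<not> P" using caseB that unfolding P_def by (simp add: not_le)
  have Xzero: "pmf X k = 0" if z: "uO m k = 0" "uO (m+1) k = 0" "lE * uE m k = 0"
     "\<forall>j\<in>{1..m}. vV m j k = 0 \<and> \<kappa> j * uE m k = 0" for k
  proof -
    have a1: "A1 k = 0" using z by (simp add: A1_def)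
    have a2: "lE * A2 k = 0"
    proof -
      have "lE * A2 k = (1 - \<alpha>) * (lE * uE m k)" using z by (simp add: A2_def mult.left_commute)
      then show ?thesis using z by simp
    qed
    have s1: "(\<Sum>j=1..m. lam j * L j k) = 0" by (rule sum.neutral) (use z in \<open>auto simp: L_def\<close>)
    have s1b: "(\<Sum>j=1..m. lam j * LB j k) = 0" by (rule sum.neutral) (use z in \<open>auto simp: LB_def\<close>)
    have s2: "(\<Sum>j=1..m. \<kappa> j * K j k) = 0"
    proof (rule sum.neutral, rule ballI)
      fix j assume j: "j \<in> {1..m}"
      have "\<kappa> j * K j k = (1 - a') * (\<kappa> j * uE m k)" using z j by (simp add: K_def mult.left_commute)
      moreover have e0: "\<kappa> j * uE m k = 0" using z(4) j by blast
      ultimately show "\<kappa> j * K j k = 0" by (metis mult_zero_right)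
    qed
    show ?thesis
    proof (cases P)
      case True then show ?thesis using a1 a2 s1 s2 by (simp add: hA)
    next
      case False then show ?thesis using a1 a2 s1b by (simp add: hB)
    qed
  qed
  have Xbig: "pmf X k = 0" if "2*m+1 < k" for k
    by (rule Xzero) (use that in \<open>auto simp: uO_def uE_def vV_zero_big\<close>)
  have X0: "pmf X 0 = 0" if "b < real m"
  proof -
    have lE0: "lE = 0" and sk: "(\<Sum>j=1..m. \<kappa> j) = 0" using mgtb that by auto
    have "\<forall>j\<in>{1..m}. \<kappa> j = 0" using sk nonneg(4) sum_nonneg_eq_0_iff[of "{1..m}" \<kappa>] by simp
    then show ?thesis by (intro Xzero) (auto simp: uO_def lE0 vV_zero0)
  qed
  have phi1_eq: "v1 * gX Y k - real k = M" if "k \<in> set_pmf X" for k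
  proof -
    have nz: "pmf X k \<noteq> 0" using that by (simp add: set_pmf_iff)
    show ?thesis
    proof (cases "k = 0")
      case True
      have "\<not> b < real m" using X0 nz True by auto
      then have "b = real m" using b by simp
      then have "b / real m = 1" using m0 by simp
      then show ?thesis using gY0 True by (simp add: M_def)
    next
      case False
      then have k1: "1 \<le> k" by simp
      have "k \<le> 2*m+1" using Xbig nz by (meson not_le)
      have "real (2 * min ((k+1) div 2) (m+1) + (if even k \<and> k \<le> 2*m then 1 else (0::nat))) = real (k + 1)"
        using cnt3[OF k1 \<open>k \<le> 2*m+1\<close>] by presburger
      then show ?thesis using gY[OF k1] by (simp add: M_def)
    qed
  qed
  define T where "T = (real m + 1 - \<alpha>) / (real m * (real m + 1))"
  define Q where "Q = 1 / (real m + 1) * ((1 - \<alpha>) / real m - \<alpha> / (real m + 1))"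
  define AA where "AA = (1 - \<alpha>) / (real m * (real m + 1))"
  have m1: "real m + 1 > 0" by simp
  have m2: "2 * real m + 1 > 0" by simp
  have DA1: "DD A1 = T"
  proof -
    have "A1 = (\<lambda>k. (1 - \<alpha>) * uO m k + \<alpha> * uO (m + 1) k)" by (rule ext) (simp add: A1_def)
    then have "DD A1 = (1 - \<alpha>) / real m + \<alpha> / (real m + 1)" using DD_u[OF m] by simp
    also have "\<dots> = T" unfolding T_def by (rule fA1(1)[OF m0])
    finally show ?thesis .
  qed
  have DA2: "DD A2 = 1 / (real m + 1)"
  proof -
    have "A2 = (\<lambda>k. (1 - \<alpha>) * uE m k + \<alpha> * uO (m + 1) k)" by (rule ext) (simp add: A2_def)
    then have "DD A2 = (1 - \<alpha>) / (real m + 1) + \<alpha> / (real m + 1)" using DD_u[OF m] by simp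
    also have "\<dots> = 1 / (real m + 1)" by (simp add: add_divide_distrib[symmetric])
    finally show ?thesis .
  qed
  have DL: "DD (L j) = T" if "j \<in> {1..m}" for j
  proof -
    have "L j = (\<lambda>k. a' * vV m j k + (1 - a') * uO m k)" by (rule ext) (simp add: L_def)
    then have "DD (L j) = a' * (2 / (2 * real m + 1)) + (1 - a') / real m"
      using DD_u[OF m] DD_vV that by simp
    also have "\<dots> = T" unfolding T_def a'_def by (rule fL[OF m0])
    finally show ?thesis .
  qed
  have DK: "DD (K j) = T - Q" if "j \<in> {1..m}" for j
  proof -
    have "K j = (\<lambda>k. a' * vV m j k + (1 - a') * uE m k)" by (rule ext) (simp add: K_def)
    then have "DD (K j) = a' * (2 / (2 * real m + 1)) + (1 - a') / (real m + 1)"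
      using DD_u[OF m] DD_vV that by simp
    also have "\<dots> = T - Q" unfolding T_def Q_def a'_def by (rule fK[OF m0])
    finally show ?thesis .
  qed
  have DLB: "DD (LB j) = T" if "j \<in> {1..m}" for j
  proof -
    have "LB j = (\<lambda>k. s' * vV m j k + (1 - s') * uO (m+1) k)" by (rule ext) (simp add: LB_def)
    then have "DD (LB j) = s' * (2 / (2 * real m + 1)) + (1 - s') / (real m + 1)"
      using DD_u[OF m] DD_vV that by simp
    also have "\<dots> = T" unfolding T_def s'_def by (rule fLB[OF m0])
    finally show ?thesis .
  qed
  have TA: "T - 1 / (real m + 1) = AA" unfolding T_def AA_def by (rule fA1(2)[OF m0])
  have eqn': "T - 2 / v2 = lE * AA + (\<Sum>j=1..m. \<kappa> j) * Q"
  proof -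
    have "(\<Sum>j=1..m. \<kappa> j * (1 / (real m + 1)) * ((1 - \<alpha>) / real m - \<alpha> / (real m + 1))) = (\<Sum>j=1..m. \<kappa> j * Q)"
      unfolding Q_def by (simp only: mult.assoc)
    also have "\<dots> = (\<Sum>j=1..m. \<kappa> j) * Q" by (simp only: sum_distrib_right)
    finally show ?thesis using eqn unfolding T_def AA_def by simp
  qed
  have DDX: "DD (pmf X) = 2 / v2"
  proof (cases P)
    case True
    have "DD (pmf X) = lO * DD A1 + lE * DD A2 + (\<Sum>j=1..m. lam j * DD (L j)) + (\<Sum>j=1..m. \<kappa> j * DD (K j))"
      by (simp add: hA[OF True])
    also have "(\<Sum>j=1..m. lam j * DD (L j)) = (\<Sum>j=1..m. lam j) * T"
      by (simp add: DL sum_distrib_right)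
    also have "(\<Sum>j=1..m. \<kappa> j * DD (K j)) = (\<Sum>j=1..m. \<kappa> j) * (T - Q)"
      by (simp add: DK sum_distrib_right)
    finally show ?thesis unfolding DA1 DA2
      by (rule trans, intro combine[OF _ eqn' TA]) (use sum1 in simp_all)
  next
    case False
    have sk0: "(\<Sum>j=1..m. \<kappa> j) = 0" using kB[OF False] by simp
    have "DD (pmf X) = lO * DD A1 + lE * DD A2 + (\<Sum>j=1..m. lam j * DD (LB j))"
      by (simp add: hB[OF False])
    also have "(\<Sum>j=1..m. lam j * DD (LB j)) = (\<Sum>j=1..m. lam j) * T"
      by (simp add: DLB sum_distrib_right)
    finally have "DD (pmf X) = lO * T + lE * (1 / (real m + 1)) + (\<Sum>j=1..m. lam j) * T + (\<Sum>j=1..m. \<kappa> j) * (T - Q)"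
      unfolding DA1 DA2 sk0 by simp
    also have "\<dots> = 2 / v2" by (intro combine[OF _ eqn' TA]) (use sum1 in simp_all)
    finally show ?thesis .
  qed
  define G where "G = gX X"
  have G20: "G 2 - G 0 = 2 / v2"
  proof -
    have "measure_pmf.prob X {..<2} = pmf X 0 + pmf X 1"
      by (simp add: measure_measure_pmf_finite numeral_2_eq_2)
    then have "G 2 - G 0 = DD (pmf X)" by (simp add: G_def gX_def DD_def)
    then show ?thesis using DDX by simp
  qed
  define d where "d = G 2 - G 0"
  have d: "d = 2 / v2" using G20 by (simp add: d_def)
  have v2d: "v2 * d = 2" using v(2) by (simp add: d)
  have pYev': "pmf Y k \<ge> c" if ev: "even k" "k \<le> 2*m" for k
  proof -
    from ev(1) obtain i where "k = 2*i" by (rule evenE)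
    then show ?thesis using pYev[of i] ev(2) by simp
  qed
  have nb: "G (2*t) + G (2*t+4) = 2 * G (2*t+2)" if t2: "t + 2 \<le> m" for t
  proof -
    have y0: "pmf Y (2*t) \<ge> c" "pmf Y (2*t+4) \<ge> c" "pmf Y (2*t+2) \<ge> c"
      using pYev'[of "2*t"] pYev'[of "2*t+4"] pYev'[of "2*t+2"] t2 by simp_all
    have y1: "pmf Y (2*t+2) = c" using pYeq[of "t+1"] t2 by (simp add: algebra_simps)
    have f1: "c/2 * G (2*t) + c/2 * G (2*t+4) + (-c) * G (2*t+2) \<le> 0"
      unfolding G_def
      by (rule pert3[OF NE suppY]) (use t2 y0 y1 cpos in \<open>simp_all add: algebra_simps\<close>)
    have f2: "(-c/2) * G (2*t) + (-c/2) * G (2*t+4) + c * G (2*t+2) \<le> 0"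
      unfolding G_def
      by (rule pert3[OF NE suppY]) (use t2 y0 y1 cpos in \<open>simp_all add: algebra_simps\<close>)
    have "c * (G (2*t) + G (2*t+4) - 2 * G (2*t+2)) \<le> 0" "c * (G (2*t) + G (2*t+4) - 2 * G (2*t+2)) \<ge> 0"
      using f1 f2 by (simp_all add: algebra_simps)
    then have "c * (G (2*t) + G (2*t+4) - 2 * G (2*t+2)) = 0" by linarith
    then have "G (2*t) + G (2*t+4) - 2 * G (2*t+2) = 0" using cpos by simp
    then show ?thesis by simp
  qed
  have lin0: "i + 1 \<le> m \<longrightarrow> G (2*i) = G 0 + real i * d \<and> G (2*i+2) = G 0 + (real i + 1) * d" for i
  proof (induction i)
    case 0
    show ?case by (simp add: d_def numeral_2_eq_2)
  next
    case (Suc i)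
    show ?case
    proof
      assume h: "Suc i + 1 \<le> m"
      then have ih: "G (2*i) = G 0 + real i * d" "G (2*i+2) = G 0 + (real i + 1) * d" using Suc.IH by auto
      have nbi: "G (2*i) + G (2*i+4) = 2 * G (2*i+2)" using nb[of i] h by simp
      have x1a: "(real i + 1) * d = real i * d + d" by (simp add: algebra_simps)
      have x1b: "real (Suc i) * d = real i * d + d" by (simp add: algebra_simps)
      have x1c: "(real (Suc i) + 1) * d = real i * d + 2 * d" by (simp add: algebra_simps)
      have e1: "2 * Suc i = 2*i+2" and e2: "2 * Suc i + 2 = 2*i+4" by simp_all
      show "G (2 * Suc i) = G 0 + real (Suc i) * d \<and> G (2 * Suc i + 2) = G 0 + (real (Suc i) + 1) * d" (is ?g)
      proof -
        have e3: "2*i+2+2 = 2*i+4" by simp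
        show ?g unfolding e1 e3 x1b x1c by (intro conjI) (use ih nbi x1a in linarith)+
      qed
    qed
  qed
  have lin: "G (2*i) = G 0 + real i * d" if "i \<le> m" for i
  proof (cases i)
    case 0 then show ?thesis by simp
  next
    case (Suc i')
    then have "G (2*i'+2) = G 0 + (real i' + 1) * d" using lin0[of i'] that by simp
    moreover have "2*i = 2*i'+2" using Suc by simp
    ultimately show ?thesis using Suc by simp
  qed
  have ub: "G k \<le> G 0 + real k * d / 2" for k
  proof (cases "k \<le> 2*m")
    case True
    show ?thesis
    proof (cases "even k")
      case True
      then obtain i where k: "k = 2*i" by (rule evenE)
      then show ?thesis using lin[of i] \<open>k \<le> 2*m\<close> by simp
    next
      case False
      then obtain t where k: "k = 2*t+1" by (rule oddE)
      have t1: "t + 1 \<le> m" using k \<open>k \<le> 2*m\<close> by simp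
      have y0: "pmf Y (2*t) \<ge> c" "pmf Y (2*t+2) \<ge> c"
        using pYev'[of "2*t"] pYev'[of "2*t+2"] t1 by simp_all
      have f: "(-c/2) * G (2*t) + (-c/2) * G (2*t+2) + c * G (2*t+1) \<le> 0"
        unfolding G_def
        by (rule pert3[OF NE suppY]) (use t1 y0 cpos in \<open>simp_all add: algebra_simps\<close>)
      have l1: "G (2*t) = G 0 + real t * d" using lin[of t] t1 by simp
      have l2: "G (2*t+2) = G 0 + (real t + 1) * d" using lin[of "t+1"] t1 by (simp add: algebra_simps)
      have "(-c/2) * G (2*t) + (-c/2) * G (2*t+2) + c * G (2*t+1) = c * (G (2*t+1) - (G 0 + real (2*t+1) * d / 2))"
        unfolding l1 l2 by (simp add: algebra_simps)
      with f have "c * (G (2*t+1) - (G 0 + real (2*t+1) * d / 2)) \<le> 0" by simp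
      then have "G (2*t+1) - (G 0 + real (2*t+1) * d / 2) \<le> 0" using cpos by (simp add: mult_le_0_iff)
      then show ?thesis using k by simp
    qed
  next
    case False
    then have k: "2*m < k" by simp
    have kpos: "real k > 0" using k by simp
    have r: "2 * real m / real k < 1" using k kpos by (simp add: divide_simps)
    have y0: "pmf Y 0 \<ge> c" using pYev[of 0] by simp
    have y1: "pmf Y (2*m) = c" using pYeq[of m] m by simp
    have sY: "set_pmf Y \<subseteq> {..k}" using suppY k by auto
    have f: "(c * (1 - 2 * real m / real k)) * G 0 + (c * (2 * real m / real k)) * G k + (-c) * G (2*m) \<le> 0"
      unfolding G_def
    proof (rule pert3[OF NE sY])
      show "0 \<le> pmf Y 0 + c * (1 - 2 * real m / real k)" using y0 r cpos by (simp add: mult_pos_pos)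
      show "0 \<le> pmf Y k + c * (2 * real m / real k)" using cpos kpos by simp
      show "0 \<le> pmf Y (2*m) + - c" using y1 by simp
      show "c * (1 - 2 * real m / real k) + c * (2 * real m / real k) + - c = 0" by (simp add: algebra_simps)
      show "c * (1 - 2 * real m / real k) * real 0 + c * (2 * real m / real k) * real k + - c * real (2 * m) = 0"
        using kpos by simp
    qed (use k m in auto)
    have l: "G (2*m) = G 0 + real m * d" using lin[of m] by simp
    have "(c * (1 - 2 * real m / real k)) * G 0 + (c * (2 * real m / real k)) * G k + (-c) * G (2*m)
        = (2 * real m * c / real k) * (G k - (G 0 + real k * d / 2))"
      unfolding l using kpos by (simp add: field_simps)
    with f have h1: "(2 * real m * c / real k) * (G k - (G 0 + real k * d / 2)) \<le> 0" by simp
    have h2: "2 * real m * c / real k > 0" using m0 cpos kpos by simp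
    have "G k - (G 0 + real k * d / 2) \<le> 0"
    proof (rule ccontr)
      assume "\<not> G k - (G 0 + real k * d / 2) \<le> 0"
      then have "0 < (2 * real m * c / real k) * (G k - (G 0 + real k * d / 2))"
        using h2 by (intro mult_pos_pos) auto
      then show False using h1 by linarith
    qed
    then show ?thesis by linarith
  qed
  have phi2_le: "v2 * gX X k - real k \<le> v2 * gX X 0" for k
  proof -
    have "v2 * G k \<le> v2 * (G 0 + real k * d / 2)" using ub[of k] v(2) by (simp add: mult_left_mono)
    also have "\<dots> = v2 * G 0 + real k * (v2 * d) / 2" by (simp add: algebra_simps)
    finally show ?thesis using v2d by (simp add: G_def)
  qed
  have phi2_eq: "v2 * gX X k - real k = v2 * gX X 0" if "k \<in> set_pmf Y" for k
  proof -
    have "k = 0 \<or> (even k \<and> k \<le> 2*m)" using suppY2[OF that] .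
    then obtain i where k: "k = 2*i" "i \<le> m" by (metis evenE mult_0_right le0 mult_le_cancel1 zero_less_numeral)
    have "v2 * G k = v2 * G 0 + real i * (v2 * d)" using lin[OF k(2)] k(1) by (simp add: algebra_simps)
    then show ?thesis using v2d k(1) by (simp add: G_def)
  qed
  show ?thesis unfolding allpay_NE_def
  proof (intro conjI allI impI)
    show "finite_mean X" "finite_mean Y" using fm by auto
  next
    fix X' assume fX': "finite_mean X'"
    have i1: "integrable (measure_pmf X') (\<lambda>a. v1 * gX Y a - real a)"
      using fX' gX_int unfolding finite_mean_def by (intro Bochner_Integration.integrable_diff integrable_mult_right) auto
    have "allpay_payoff v1 X' Y = (\<integral>a. v1 * gX Y a - real a \<partial>measure_pmf X')" by (rule payoff_int[OF fX'])
    also have "\<dots> \<le> (\<integral>a. M \<partial>measure_pmf X')" by (rule integral_mono[OF i1]) (simp_all add: phi1_le)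
    also have "\<dots> = M" by simp
    also have "M = (\<integral>a. v1 * gX Y a - real a \<partial>measure_pmf X)"
    proof -
      have "(\<integral>a. v1 * gX Y a - real a \<partial>measure_pmf X) = (\<integral>a. M \<partial>measure_pmf X)"
        by (rule integral_cong_AE) (auto simp: AE_measure_pmf_iff phi1_eq)
      then show ?thesis by simp
    qed
    also have "\<dots> = allpay_payoff v1 X Y" by (rule payoff_int[OF fm(1), symmetric])
    finally show "allpay_payoff v1 X' Y \<le> allpay_payoff v1 X Y" .
  next
    fix Y' assume fY': "finite_mean Y'"
    have i1: "integrable (measure_pmf Y') (\<lambda>a. v2 * gX X a - real a)"
      using fY' gX_int unfolding finite_mean_def by (intro Bochner_Integration.integrable_diff integrable_mult_right) auto
    have "allpay_payoff v2 Y' X = (\<integral>a. v2 * gX X a - real a \<partial>measure_pmf Y')" by (rule payoff_int[OF fY'])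
    also have "\<dots> \<le> (\<integral>a. v2 * gX X 0 \<partial>measure_pmf Y')" by (rule integral_mono[OF i1]) (simp_all add: phi2_le)
    also have "\<dots> = v2 * gX X 0" by simp
    also have "v2 * gX X 0 = (\<integral>a. v2 * gX X a - real a \<partial>measure_pmf Y)"
    proof -
      have "(\<integral>a. v2 * gX X a - real a \<partial>measure_pmf Y) = (\<integral>a. v2 * gX X 0 \<partial>measure_pmf Y)"
        by (rule integral_cong_AE) (auto simp: AE_measure_pmf_iff phi2_eq)
      then show ?thesis by simp
    qed
    also have "\<dots> = allpay_payoff v2 Y X" by (rule payoff_int[OF fm(2), symmetric])
    finally show "allpay_payoff v2 Y' X \<le> allpay_payoff v2 Y X" .
  qed
qed


end
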